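(* Let $K\subseteq\mathbb{R}^d$ be a topologically regular compact set. Assume that for every $x\in\partial K$ there are $C_x>0$ and a neighbourhood $V_x$ of $x$ such that every $y\in V_x\cap K$ can be joined to $x$ by a rectifiable path in $\mathring K\cup\{x,y\}$ of length at most $C_x|x-y|$. Then $C^1_{\mathrm{int}}(K)=C^1(K)$; i.e., for every $f\in C^1_{\mathrm{int}}(K)$, the continuous extension of $f$ to $K$ belongs to $C^1(K)$ with the continuous extension of its derivative as a continuous derivative on $K$ (and conversely every $f\in C^1(K)$ restricts to an element of $C^1_{\mathrm{int}}(K)$).
   Context: $K$ is topologically regular if it is the closure of its interior $\mathring K$. $C^1_{\mathrm{int}}(K)$ is the set of $f\in C^1(\mathring K)$ such that $f$ and its derivative $df$ extend continuously to $K$. $C^1(K)$ is the set of $f:K\to\mathbb{R}$ admitting a continuous $df:K\to\mathbb{R}^d$ with $\lim_{y\to x,\,y\in K\setminus\{x\}}\frac{f(y)-f(x)-\langle df(x),y-x\rangle}{|y-x|}=0$ for all $x\in K$. A rectifiable path is a continuous map $\gamma:[a,b]\to\mathbb{R}^d$ of finite length $\sup\sum_j|\gamma(t_j)-\gamma(t_{j-1})|$. *)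

theory Defs
  imports "HOL-Analysis.Analysis"
begin

definition partition_sums :: "(real \<Rightarrow> 'a::real_normed_vector) \<Rightarrow> real \<Rightarrow> real \<Rightarrow> real set" where
  "partition_sums \<gamma> a b =
     {(\<Sum>j\<in>{1..n}. norm (\<gamma> (t j) - \<gamma> (t (j - 1)))) | n t.
        t 0 = a \<and> t n = b \<and> (\<forall>j<n. t j \<le> t (Suc j))}"

definition path_length :: "(real \<Rightarrow> 'a::real_normed_vector) \<Rightarrow> real \<Rightarrow> real \<Rightarrow> real" where
  "path_length \<gamma> a b = Sup (partition_sums \<gamma> a b)"

definition rectifiable_path :: "(real \<Rightarrow> 'a::real_normed_vector) \<Rightarrow> real \<Rightarrow> real \<Rightarrow> bool" where
  "rectifiable_path \<gamma> a b \<longleftrightarrow> a \<le> b \<and> continuous_on {a..b} \<gamma> \<and> bdd_above (partition_sums \<gamma> a b)"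

definition topologically_regular :: "'a::topological_space set \<Rightarrow> bool" where
  "topologically_regular K \<longleftrightarrow> closure (interior K) = K"

text \<open>f (defined on K) together with df : K \<rightarrow> R^d represent an element of
  C^1_int(K): f is C^1 on the interior with gradient df there, and f, df are
  continuous on K (i.e. they are the continuous extensions to K).\<close>
definition C1_int :: "'a::euclidean_space set \<Rightarrow> ('a \<Rightarrow> real) \<Rightarrow> ('a \<Rightarrow> 'a) \<Rightarrow> bool" where
  "C1_int K f df \<longleftrightarrow>
     (\<forall>x\<in>interior K. (f has_derivative (\<lambda>h. df x \<bullet> h)) (at x)) \<and>
     continuous_on (interior K) df \<and>
     continuous_on K f \<and> continuous_on K df"

definition C1_on :: "'a::euclidean_space set \<Rightarrow> ('a \<Rightarrow> real) \<Rightarrow> ('a \<Rightarrow> 'a) \<Rightarrow> bool" where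
  "C1_on K f df \<longleftrightarrow>
     continuous_on K df \<and>
     (\<forall>x\<in>K. ((\<lambda>y. (f y - f x - df x \<bullet> (y - x)) / norm (y - x)) \<longlongrightarrow> 0) (at x within K))"

end

theory Submission
  imports Defs
begin



lemma ps_le_len:
  assumes "rectifiable_path \<gamma> a b" "s \<in> partition_sums \<gamma> a b"
  shows "s \<le> path_length \<gamma> a b"
  using assms unfolding rectifiable_path_def path_length_def
  by (intro cSup_upper) auto

lemma three_pt:
  assumes "rectifiable_path \<gamma> a b" "t \<in> {a..b}"
  shows "norm (\<gamma> t - \<gamma> a) + norm (\<gamma> b - \<gamma> t) \<le> path_length \<gamma> a b"
proof -
  define p where "p = (\<lambda>k::nat. if k = 0 then a else if k = 1 then t else b)"
  have "(\<Sum>j\<in>{1..2::nat}. norm (\<gamma> (p j) - \<gamma> (p (j - 1)))) \<in> partition_sums \<gamma> a b"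
    unfolding partition_sums_def
    apply (rule CollectI, rule exI[of _ 2], rule exI[of _ p])
    using assms(2) by (auto simp: p_def less_2_cases_iff)
  moreover have "(\<Sum>j\<in>{1..2::nat}. norm (\<gamma> (p j) - \<gamma> (p (j - 1)))) = norm (\<gamma> t - \<gamma> a) + norm (\<gamma> b - \<gamma> t)"
    by (simp add: p_def numeral_2_eq_2)
  ultimately show ?thesis using ps_le_len[OF assms(1)] by metis
qed

lemma onorm_inner_bd: "onorm (\<lambda>h. (w::'a::real_inner) \<bullet> h) \<le> norm w"
  by (rule onorm_bound) (auto simp: Cauchy_Schwarz_ineq2)


lemma grid_bound:
  fixes \<gamma> :: "real \<Rightarrow> 'a::euclidean_space" and g :: "'a \<Rightarrow> real"
  assumes rp: "rectifiable_path \<gamma> a b" and au: "a \<le> u" and uv: "u \<le> v" and vb: "v \<le> b"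
    and img: "\<gamma> ` {u..v} \<subseteq> U" and opU: "open U"
    and der: "\<And>z. z \<in> U \<Longrightarrow> (g has_derivative g' z) (at z)"
    and bd: "\<And>z. z \<in> U \<Longrightarrow> onorm (g' z) \<le> B" and B0: "0 \<le> B"
  shows "\<bar>g (\<gamma> v) - g (\<gamma> u)\<bar> \<le> B * path_length \<gamma> a b"
proof -
  have contab: "continuous_on {a..b} \<gamma>" using rp by (simp add: rectifiable_path_def)
  have cont: "continuous_on {u..v} \<gamma>"
    by (rule continuous_on_subset[OF contab]) (use au vb in auto)
  have cpt: "compact (\<gamma> ` {u..v})" by (rule compact_continuous_image[OF cont]) simp
  obtain e where e0: "0 < e" and eU: "\<And>z. z \<in> \<gamma> ` {u..v} \<Longrightarrow> ball z e \<subseteq> U"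
    using Heine_Borel_lemma[OF cpt, of "{U}"] img opU by auto
  have uc: "uniformly_continuous_on {u..v} \<gamma>"
    by (rule compact_uniformly_continuous[OF cont]) simp
  then obtain \<rho> where \<rho>0: "\<rho> > 0" and \<rho>: "\<And>s t. s \<in> {u..v} \<Longrightarrow> t \<in> {u..v} \<Longrightarrow> dist s t < \<rho> \<Longrightarrow> dist (\<gamma> s) (\<gamma> t) < e"
    unfolding uniformly_continuous_on_def using e0 by metis
  obtain n :: nat where n: "(v - u) / \<rho> < real n" using reals_Archimedean2 by blast
  define N where "N = Suc n"
  have N0: "real N > 0" by (simp add: N_def)
  have Nrho: "(v - u) / real N < \<rho>"
  proof -
    have "(v - u) < real n * \<rho>" using n \<rho>0 by (simp add: field_simps)
    also have "\<dots> \<le> real N * \<rho>" using \<rho>0 by (simp add: N_def)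
    finally show ?thesis using N0 by (simp add: field_simps)
  qed
  define t where "t = (\<lambda>j::nat. u + real j * ((v - u) / real N))"
  have hstep: "(v - u) / real N \<ge> 0" using uv N0 by simp
  have t_in: "t j \<in> {u..v}" if "j \<le> N" for j
  proof -
    have "real j * ((v - u) / real N) \<le> real N * ((v - u) / real N)"
      using that hstep by (intro mult_right_mono) auto
    also have "\<dots> = v - u" using N0 by simp
    moreover have "0 \<le> real j * ((v - u) / real N)" using hstep by (intro mult_nonneg_nonneg) auto
    ultimately show ?thesis by (auto simp: t_def)
  qed
  have t_suc: "t (Suc j) = t j + (v - u) / real N" for j unfolding t_def by (simp add: distrib_right add_divide_distrib)
  have t_mono: "t j \<le> t (Suc j)" for j using hstep t_suc[of j] by linarith
  have t0: "t 0 = u" by (simp add: t_def)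
  have tN: "t N = v" using N0 by (simp add: t_def)
  have step: "\<bar>g (\<gamma> (t (Suc j))) - g (\<gamma> (t j))\<bar> \<le> B * norm (\<gamma> (t (Suc j)) - \<gamma> (t j))"
    if j: "j < N" for j
  proof -
    have in1: "t j \<in> {u..v}" "t (Suc j) \<in> {u..v}" using t_in j by auto
    have "dist (t (Suc j)) (t j) < \<rho>" using Nrho hstep t_suc[of j] by (simp add: dist_real_def)
    then have "dist (\<gamma> (t (Suc j))) (\<gamma> (t j)) < e" using \<rho> in1 by blast
    then have y_in: "\<gamma> (t (Suc j)) \<in> ball (\<gamma> (t j)) e" by (simp add: dist_commute)
    have bsub: "ball (\<gamma> (t j)) e \<subseteq> U" using eU in1 by blast
    have "norm (g (\<gamma> (t (Suc j))) - g (\<gamma> (t j))) \<le> B * norm (\<gamma> (t (Suc j)) - \<gamma> (t j))"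
    proof (rule differentiable_bound[of "ball (\<gamma> (t j)) e" g g' B])
      show "convex (ball (\<gamma> (t j)) e)" by simp
      show "\<And>x. x \<in> ball (\<gamma> (t j)) e \<Longrightarrow> (g has_derivative g' x) (at x within ball (\<gamma> (t j)) e)"
        using der bsub by (blast intro: has_derivative_at_withinI)
      show "\<And>x. x \<in> ball (\<gamma> (t j)) e \<Longrightarrow> onorm (g' x) \<le> B" using bd bsub by blast
      show "\<gamma> (t j) \<in> ball (\<gamma> (t j)) e" using e0 by simp
      show "\<gamma> (t (Suc j)) \<in> ball (\<gamma> (t j)) e" by (rule y_in)
    qed
    then show ?thesis by simp
  qed
  have tel: "g (\<gamma> v) - g (\<gamma> u) = (\<Sum>j<N. g (\<gamma> (t (Suc j))) - g (\<gamma> (t j)))"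
    using sum_lessThan_telescope[of "\<lambda>j. g (\<gamma> (t j))" N] t0 tN by simp
  have "\<bar>g (\<gamma> v) - g (\<gamma> u)\<bar> \<le> (\<Sum>j<N. \<bar>g (\<gamma> (t (Suc j))) - g (\<gamma> (t j))\<bar>)"
    unfolding tel by (rule sum_abs)
  also have "\<dots> \<le> (\<Sum>j<N. B * norm (\<gamma> (t (Suc j)) - \<gamma> (t j)))"
    by (rule sum_mono) (use step in auto)
  also have "\<dots> = B * (\<Sum>j<N. norm (\<gamma> (t (Suc j)) - \<gamma> (t j)))" by (simp add: sum_distrib_left)
  also have "\<dots> \<le> B * path_length \<gamma> a b"
  proof (rule mult_left_mono[OF _ B0])
    define p where "p = (\<lambda>k::nat. if k = 0 then a else if k = N + 2 then b else t (k - 1))"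
    define h where "h = (\<lambda>j. norm (\<gamma> (p j) - \<gamma> (p (j - 1))))"
    have mono: "\<forall>j<N+2. p j \<le> p (Suc j)"
    proof (intro allI impI)
      fix j assume j: "j < N + 2"
      show "p j \<le> p (Suc j)"
      proof (cases "j = 0")
        case True then show ?thesis using au t0 by (simp add: p_def)
      next
        case False
        show ?thesis
        proof (cases "j = N + 1")
          case True then show ?thesis using False tN vb by (simp add: p_def)
        next
          case F2: False
          then have "Suc j \<noteq> N + 2" by simp
          moreover have "j \<noteq> N+2" using j by simp
          ultimately show ?thesis using False t_mono[of "j - 1"] by (simp add: p_def)
        qed
      qed
    qed
    have mem: "sum h {1..N+2} \<in> partition_sums \<gamma> a b"
      unfolding partition_sums_def h_def
      apply (rule CollectI, rule exI[of _ "N+2"], rule exI[of _ p])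
      using mono by (simp add: p_def)
    have inj: "inj_on (\<lambda>j. j + 2) {..<N}" by (simp add: inj_on_def)
    have "(\<Sum>j<N. norm (\<gamma> (t (Suc j)) - \<gamma> (t j))) = (\<Sum>j<N. h (j + 2))"
      by (rule sum.cong) (auto simp: h_def p_def)
    also have "\<dots> = sum h ((\<lambda>j. j + 2) ` {..<N})" using sum.reindex[OF inj, of h] by (simp add: o_def)
    also have "\<dots> \<le> sum h {1..N+2}"
      by (rule sum_mono2) (auto simp: h_def)
    also have "\<dots> \<le> path_length \<gamma> a b" by (rule ps_le_len[OF rp mem])
    finally show "(\<Sum>j<N. norm (\<gamma> (t (Suc j)) - \<gamma> (t j))) \<le> path_length \<gamma> a b" .
  qed
  finally show ?thesis .
qed


lemma path_bound:
  fixes \<gamma> :: "real \<Rightarrow> 'a::euclidean_space" and g :: "'a \<Rightarrow> real"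
  assumes rp: "rectifiable_path \<gamma> a b" and ga: "\<gamma> a = x" and gb: "\<gamma> b = y" and xy: "x \<noteq> y"
    and img: "\<gamma> ` {a..b} \<subseteq> U \<union> {x, y}" and opU: "open U"
    and gc: "continuous_on {a..b} (\<lambda>t. g (\<gamma> t))"
    and der: "\<And>z. z \<in> U \<Longrightarrow> (g has_derivative g' z) (at z)"
    and bd: "\<And>z. z \<in> U \<Longrightarrow> onorm (g' z) \<le> B" and B0: "0 \<le> B"
  shows "\<bar>g y - g x\<bar> \<le> B * path_length \<gamma> a b"
proof -
  have ab: "a \<le> b" and contab: "continuous_on {a..b} \<gamma>" using rp by (auto simp: rectifiable_path_def)
  define T0 where "T0 = {t \<in> {a..b}. \<gamma> t = x}"
  have cT0: "closed T0" unfolding T0_def by (rule continuous_closed_preimage_constant[OF contab]) simp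
  have aT0: "a \<in> T0" using ab ga by (simp add: T0_def)
  have bT0: "bdd_above T0" unfolding T0_def by (rule bdd_aboveI[of _ b]) auto
  define s0 where "s0 = Sup T0"
  have s0T: "s0 \<in> T0" unfolding s0_def using closed_contains_Sup[OF _ bT0 cT0] aT0 by blast
  have s0_ub: "t \<le> s0" if "t \<in> T0" for t unfolding s0_def by (rule cSup_upper[OF that bT0])
  have s0ab: "s0 \<in> {a..b}" and gs0: "\<gamma> s0 = x" using s0T by (auto simp: T0_def)
  define T1 where "T1 = {t \<in> {s0..b}. \<gamma> t = y}"
  have cont1: "continuous_on {s0..b} \<gamma>" by (rule continuous_on_subset[OF contab]) (use s0ab in auto)
  have cT1: "closed T1" unfolding T1_def by (rule continuous_closed_preimage_constant[OF cont1]) simp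
  have bT1: "b \<in> T1" using s0ab gb by (simp add: T1_def)
  have bbT1: "bdd_below T1" unfolding T1_def by (rule bdd_belowI[of _ s0]) auto
  define s1 where "s1 = Inf T1"
  have s1T: "s1 \<in> T1" unfolding s1_def using closed_contains_Inf[OF _ bbT1 cT1] bT1 by blast
  have s1_lb: "s1 \<le> t" if "t \<in> T1" for t unfolding s1_def by (rule cInf_lower[OF that bbT1])
  have s1ab: "s1 \<in> {s0..b}" and gs1: "\<gamma> s1 = y" using s1T by (auto simp: T1_def)
  have s01: "s0 < s1" using s1ab gs0 gs1 xy by (cases "s0 = s1") auto
  have inU: "\<gamma> t \<in> U" if t: "t \<in> {s0<..<s1}" for t
  proof -
    have tab: "t \<in> {a..b}" using t s0ab s1ab by auto
    have "\<gamma> t \<noteq> x"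
    proof
      assume "\<gamma> t = x" then have "t \<in> T0" using tab by (simp add: T0_def)
      then show False using s0_ub t by force
    qed
    moreover have "\<gamma> t \<noteq> y"
    proof
      assume "\<gamma> t = y" then have "t \<in> T1" using tab t by (simp add: T1_def)
      then show False using s1_lb t by force
    qed
    moreover have "\<gamma> t \<in> U \<union> {x, y}" using img tab by blast
    ultimately show ?thesis by blast
  qed
  define L where "L = path_length \<gamma> a b"
  define d where "d = (s1 - s0) / 2"
  have d0: "0 < d" using s01 by (simp add: d_def)
  define F where "F = (\<lambda>\<tau>. \<bar>g (\<gamma> (s1 - \<tau>)) - g (\<gamma> (s0 + \<tau>))\<bar>)"
  have inner: "F \<tau> \<le> B * L" if \<tau>: "\<tau> \<in> {0<..d}" for \<tau>
    unfolding F_def L_def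
  proof (rule grid_bound[OF rp _ _ _ _ opU der bd B0])
    show "a \<le> s0 + \<tau>" using s0ab \<tau> by auto
    show "s0 + \<tau> \<le> s1 - \<tau>" using \<tau> by (auto simp: d_def)
    show "s1 - \<tau> \<le> b" using s1ab \<tau> by auto
    show "\<gamma> ` {s0 + \<tau>..s1 - \<tau>} \<subseteq> U"
      using inU \<tau> by (auto simp: d_def)
  qed auto
  have Fc: "continuous_on {0..d} F"
  proof -
    have c1: "continuous_on {0..d} (\<lambda>\<tau>. g (\<gamma> (s1 - \<tau>)))"
      by (rule continuous_on_compose2[OF gc, of _ "\<lambda>\<tau>. s1 - \<tau>"])
         (use s0ab s1ab in \<open>auto intro!: continuous_intros simp: d_def field_simps\<close>)
    have c2: "continuous_on {0..d} (\<lambda>\<tau>. g (\<gamma> (s0 + \<tau>)))"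
      by (rule continuous_on_compose2[OF gc, of _ "\<lambda>\<tau>. s0 + \<tau>"])
         (use s0ab s1ab in \<open>auto intro!: continuous_intros simp: d_def field_simps\<close>)
    show ?thesis unfolding F_def by (intro continuous_intros c1 c2)
  qed
  have cS: "closed {\<tau> \<in> {0..d}. F \<tau> \<le> (\<lambda>_. B * L) \<tau>}"
    by (rule continuous_on_closed_Collect_le[OF Fc]) auto
  have "{0<..d} \<subseteq> {\<tau> \<in> {0..d}. F \<tau> \<le> (\<lambda>_. B * L) \<tau>}" using inner by auto
  then have "closure {0<..d} \<subseteq> {\<tau> \<in> {0..d}. F \<tau> \<le> (\<lambda>_. B * L) \<tau>}"
    using cS closure_minimal by blast
  moreover have "(0::real) \<in> {0..d}" using d0 by simp
  ultimately have "0 \<in> {\<tau> \<in> {0..d}. F \<tau> \<le> (\<lambda>_. B * L) \<tau>}" using d0 by (metis closure_greaterThanAtMost subsetD)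
  then have "F 0 \<le> B * L" by simp
  then show ?thesis using gs0 gs1 by (simp add: F_def L_def)
qed


lemma Q_abs_eq:
  fixes f :: "'a::real_inner \<Rightarrow> real"
  shows "\<bar>(f y - f x - df \<bullet> (y - x)) / norm (y - x)\<bar>
    = norm (f y - f x - df \<bullet> (y - x)) / norm (y - x)"
  by (simp add: abs_divide)

lemma dir2:
  fixes K :: "'a::euclidean_space set"
  assumes "C1_on K f df"
  shows "C1_int K f df"
proof -
  have dfc: "continuous_on K df" and lim: "\<And>x. x \<in> K \<Longrightarrow>
      ((\<lambda>y. (f y - f x - df x \<bullet> (y - x)) / norm (y - x)) \<longlongrightarrow> 0) (at x within K)"
    using assms by (auto simp: C1_on_def)
  have der: "(f has_derivative (\<lambda>h. df x \<bullet> h)) (at x)" if x: "x \<in> interior K" for x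
  proof -
    have "((\<lambda>y. (f y - f x - df x \<bullet> (y - x)) / norm (y - x)) \<longlongrightarrow> 0) (at x)"
      using lim[of x] x interior_subset at_within_interior[OF x] by auto
    then have "((\<lambda>y. norm (f y - f x - df x \<bullet> (y - x)) / norm (y - x)) \<longlongrightarrow> 0) (at x)"
      by (subst (asm) tendsto_rabs_zero_iff[symmetric]) (simp add: Q_abs_eq)
    then show ?thesis
      by (subst has_derivative_iff_norm) (simp add: bounded_linear_inner_right)
  qed
  have fc: "continuous_on K f"
    unfolding continuous_on_def
  proof
    fix x assume x: "x \<in> K"
    let ?Q = "\<lambda>y. (f y - f x - df x \<bullet> (y - x)) / norm (y - x)"
    have "((\<lambda>y. f x + df x \<bullet> (y - x) + ?Q y * norm (y - x)) \<longlongrightarrow> f x + df x \<bullet> (x - x) + 0 * norm (x - x)) (at x within K)"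
      by (intro tendsto_intros lim[OF x])
    then have t: "((\<lambda>y. f x + df x \<bullet> (y - x) + ?Q y * norm (y - x)) \<longlongrightarrow> f x) (at x within K)" by simp
    have ev: "\<forall>\<^sub>F y in at x within K. f x + df x \<bullet> (y - x) + ?Q y * norm (y - x) = f y"
      unfolding eventually_at_filter by (rule always_eventually) auto
    show "(f \<longlongrightarrow> f x) (at x within K)" by (rule Lim_transform_eventually[OF t ev])
  qed
  show ?thesis unfolding C1_int_def
    using der fc dfc continuous_on_subset[OF dfc interior_subset] by blast
qed


lemma dir1:
  fixes K :: "'a::euclidean_space set"
  assumes cK: "compact K"
    and hyp: "\<forall>x\<in>frontier K. \<exists>C>0. \<exists>V. open V \<and> x \<in> V \<and>
           (\<forall>y\<in>V \<inter> K. \<exists>\<gamma> a b. rectifiable_path \<gamma> a b \<and> \<gamma> a = x \<and> \<gamma> b = y \<and>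
               \<gamma> ` {a..b} \<subseteq> interior K \<union> {x, y} \<and> path_length \<gamma> a b \<le> C * norm (x - y))"
    and ci: "C1_int K f df"
  shows "C1_on K f df"
proof -
  have der: "\<And>x. x \<in> interior K \<Longrightarrow> (f has_derivative (\<lambda>h. df x \<bullet> h)) (at x)"
    and fc: "continuous_on K f" and dfc: "continuous_on K df"
    using ci by (auto simp: C1_int_def)
  have clK: "closed K" using cK by (rule compact_imp_closed)
  have lim: "((\<lambda>y. (f y - f x - df x \<bullet> (y - x)) / norm (y - x)) \<longlongrightarrow> 0) (at x within K)"
    if xK: "x \<in> K" for x
  proof (cases "x \<in> interior K")
    case True
    have "((\<lambda>y. norm (f y - f x - df x \<bullet> (y - x)) / norm (y - x)) \<longlongrightarrow> 0) (at x)"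
      using der[OF True] by (simp add: has_derivative_iff_norm)
    then have "((\<lambda>y. (f y - f x - df x \<bullet> (y - x)) / norm (y - x)) \<longlongrightarrow> 0) (at x)"
      by (subst tendsto_rabs_zero_iff[symmetric]) (simp add: Q_abs_eq)
    then show ?thesis using at_within_interior[OF True] by simp
  next
    case False
    then have xF: "x \<in> frontier K" using xK clK by (simp add: frontier_def closure_closed)
    obtain C V where CV: "C > 0 \<and> open V \<and> x \<in> V \<and>
           (\<forall>y\<in>V \<inter> K. \<exists>\<gamma> a b. rectifiable_path \<gamma> a b \<and> \<gamma> a = x \<and> \<gamma> b = y \<and>
               \<gamma> ` {a..b} \<subseteq> interior K \<union> {x, y} \<and> path_length \<gamma> a b \<le> C * norm (x - y))"
      using bspec[OF hyp xF] by blast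
    have C0: "C > 0" and oV: "open V" and xV: "x \<in> V" using CV by auto
    have P: "\<exists>\<gamma> a b. rectifiable_path \<gamma> a b \<and> \<gamma> a = x \<and> \<gamma> b = y \<and>
               \<gamma> ` {a..b} \<subseteq> interior K \<union> {x, y} \<and> path_length \<gamma> a b \<le> C * norm (x - y)"
      if "y \<in> V \<inter> K" for y using bspec[OF conjunct2[OF conjunct2[OF conjunct2[OF CV]]] that] .
    obtain r where r0: "r > 0" and rV: "ball x r \<subseteq> V" using oV xV open_contains_ball by blast
    show ?thesis
      unfolding Lim_within
    proof (intro allI impI)
      fix \<epsilon> :: real assume e0: "\<epsilon> > 0"
      define B where "B = \<epsilon> / (2 * C)"
      have B0: "B > 0" using e0 C0 by (simp add: B_def)
      obtain \<delta> where d0: "\<delta> > 0" and d: "\<And>z. z \<in> K \<Longrightarrow> dist z x < \<delta> \<Longrightarrow> dist (df z) (df x) < B"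
      proof -
        have "\<exists>\<delta>>0. \<forall>z\<in>K. dist z x < \<delta> \<longrightarrow> dist (df z) (df x) < B"
          using dfc xK B0 unfolding continuous_on_iff by blast
        then show ?thesis using that by blast
      qed
      define dd where "dd = min r (\<delta> / (2 * C))"
      have dd0: "dd > 0" using r0 d0 C0 by (simp add: dd_def)
      show "\<exists>d>0. \<forall>y\<in>K. 0 < dist y x \<and> dist y x < d \<longrightarrow>
              dist ((f y - f x - df x \<bullet> (y - x)) / norm (y - x)) 0 < \<epsilon>"
      proof (intro exI[of _ dd] conjI dd0 ballI impI)
        fix y assume yK: "y \<in> K" and yd: "0 < dist y x \<and> dist y x < dd"
        have xy: "x \<noteq> y" using yd by auto
        have "y \<in> V" using rV yd by (auto simp: dd_def dist_commute)
        then obtain \<gamma> a b where rp: "rectifiable_path \<gamma> a b" and ga: "\<gamma> a = x" and gb: "\<gamma> b = y"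
          and img: "\<gamma> ` {a..b} \<subseteq> interior K \<union> {x, y}" and pl: "path_length \<gamma> a b \<le> C * norm (x - y)"
          using P[of y] yK by blast
        define L where "L = path_length \<gamma> a b"
        have nxy: "norm (x - y) < \<delta> / (2 * C)" using yd by (simp add: dd_def dist_norm norm_minus_commute)
        have "C * norm (x - y) < C * (\<delta> / (2 * C))" using nxy C0 by (intro mult_strict_left_mono) auto
        also have "\<dots> = \<delta> / 2" using C0 by simp
        finally have Ld: "L < \<delta> / 2" using pl by (simp add: L_def)
        define U where "U = interior K \<inter> ball x \<delta>"
        have img2: "\<gamma> ` {a..b} \<subseteq> U \<union> {x, y}"
        proof
          fix z assume "z \<in> \<gamma> ` {a..b}"
          then obtain t where t: "t \<in> {a..b}" and z: "z = \<gamma> t" by blast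
          have "norm (\<gamma> t - \<gamma> a) + norm (\<gamma> b - \<gamma> t) \<le> L" using three_pt[OF rp t] by (simp add: L_def)
          then have "norm (\<gamma> t - \<gamma> a) < \<delta>" using Ld norm_ge_zero[of "\<gamma> b - \<gamma> t"] d0 by linarith
          then have "norm (z - x) < \<delta>" using ga z by simp
          moreover have "z \<in> interior K \<union> {x, y}" using img t z by blast
          ultimately show "z \<in> U \<union> {x, y}" by (auto simp: U_def dist_norm norm_minus_commute)
        qed
        have KK: "interior K \<union> {x, y} \<subseteq> K" using xK yK interior_subset by blast
        define g where "g = (\<lambda>z. f z - df x \<bullet> z)"
        have gc: "continuous_on {a..b} (\<lambda>t. g (\<gamma> t))"
        proof -
          have "continuous_on K g" unfolding g_def by (intro continuous_intros fc)
          moreover have "continuous_on {a..b} \<gamma>" using rp by (simp add: rectifiable_path_def)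
          moreover have "\<gamma> ` {a..b} \<subseteq> K" using img KK by (rule order_trans)
          ultimately show ?thesis by (rule continuous_on_compose2)
        qed
        have gder: "(g has_derivative (\<lambda>h. (df z - df x) \<bullet> h)) (at z)" if "z \<in> U" for z
        proof -
          have zi: "z \<in> interior K" using that by (simp add: U_def)
          have "(g has_derivative (\<lambda>h. df z \<bullet> h - df x \<bullet> h)) (at z)"
            unfolding g_def by (rule has_derivative_diff[OF der[OF zi] has_derivative_inner_right[OF has_derivative_ident]])
          then show ?thesis by (simp add: inner_diff_left)
        qed
        have gbd: "onorm (\<lambda>h. (df z - df x) \<bullet> h) \<le> B" if "z \<in> U" for z
        proof -
          have "z \<in> K" "dist z x < \<delta>" using that interior_subset by (auto simp: U_def dist_commute)
          then have "norm (df z - df x) < B" using d by (simp add: dist_norm)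
          then show ?thesis using onorm_inner_bd[of "df z - df x"] by linarith
        qed
        have "\<bar>g y - g x\<bar> \<le> B * L"
          unfolding L_def
          by (rule path_bound[OF rp ga gb xy img2 _ gc gder gbd]) (use B0 in \<open>auto simp: U_def\<close>)
        also have "\<dots> \<le> B * (C * norm (x - y))" using pl B0 by (simp add: L_def)
        also have "\<dots> = \<epsilon> / 2 * norm (y - x)" using C0 by (simp add: B_def norm_minus_commute)
        finally have gi: "\<bar>g y - g x\<bar> \<le> \<epsilon> / 2 * norm (y - x)" .
        have "g y - g x = f y - f x - df x \<bullet> (y - x)" by (simp add: g_def inner_diff_right)
        then have "\<bar>f y - f x - df x \<bullet> (y - x)\<bar> \<le> \<epsilon> / 2 * norm (y - x)" using gi by simp
        moreover have ny: "norm (y - x) > 0" using xy by simp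
        ultimately have "\<bar>f y - f x - df x \<bullet> (y - x)\<bar> / norm (y - x) \<le> \<epsilon> / 2"
          by (simp add: divide_le_eq)
        then show "dist ((f y - f x - df x \<bullet> (y - x)) / norm (y - x)) 0 < \<epsilon>"
        proof -
          have "\<bar>(f y - f x - df x \<bullet> (y - x)) / norm (y - x)\<bar> < \<epsilon>"
            using \<open>\<bar>f y - f x - df x \<bullet> (y - x)\<bar> / norm (y - x) \<le> \<epsilon> / 2\<close> e0
            by (simp only: abs_divide abs_norm_cancel)
          then show ?thesis by simp
        qed
      qed
    qed
  qed
  show ?thesis unfolding C1_on_def using dfc lim by blast
qed


theorem mainTheorem14:
  fixes K :: "'a::euclidean_space set"
  assumes "compact K"
    and "topologically_regular K"
    and "\<forall>x\<in>frontier K. \<exists>C>0. \<exists>V. open V \<and> x \<in> V \<and>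
           (\<forall>y\<in>V \<inter> K. \<exists>\<gamma> a b. rectifiable_path \<gamma> a b \<and> \<gamma> a = x \<and> \<gamma> b = y \<and>
               \<gamma> ` {a..b} \<subseteq> interior K \<union> {x, y} \<and> path_length \<gamma> a b \<le> C * norm (x - y))"
  shows "\<forall>(f :: 'a \<Rightarrow> real) df. C1_int K f df \<longleftrightarrow> C1_on K f df"
  using dir1[OF assms(1) assms(3)] dir2 by blast

end
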